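(* For every integer $m\ge1$, $$\mathfrak p^{(2m)}=\sum_{a=0}^{m-1}q^{(3-2m)a}\begin{bmatrix}m-1\\ a\end{bmatrix}_{q^2}\mathfrak g^{(2m-2a)},\qquad \mathfrak p^{(2m+1)}=\sum_{a=0}^{m-1}q^{(1-2m)a}\begin{bmatrix}m-1\\ a\end{bmatrix}_{q^2}\mathfrak g^{(2m-2a+1)}.$$ In particular, $\mathfrak p^{(n)}(\kappa)\in\mathbb Z[q,q^{-1}]$ for all $n\in\mathbb N$ and all $\kappa=[2\ell-1]$ with $\ell\in\mathbb Z$.
   Context: $q$ is an indeterminate, $[n]=\frac{q^n-q^{-n}}{q-q^{-1}}$ for $n\in\mathbb Z$, $[n]!=[1]\cdots[n]$, $[0]!=1$. For $0\le a\le N$, $\begin{bmatrix}N\\ a\end{bmatrix}_{q^2}$ denotes the balanced Gaussian binomial coefficient in $q^2$, i.e. $\frac{[N]_{q^2}!}{[a]_{q^2}![N-a]_{q^2}!}$ with $[k]_{q^2}=\frac{q^{2k}-q^{-2k}}{q^2-q^{-2}}$. The polynomials $\mathfrak p_n(x)$ are defined by $\mathfrak p_0=1$, $\mathfrak p_n=0$ for $n<0$, $\mathfrak p_{n+1}=x\,\mathfrak p_n+q^{2-2n}[n][n-2]\mathfrak p_{n-1}$ ($n\ge0$); $\mathfrak p^{(n)}=\mathfrak p_n/[n]!$. The polynomials $\mathfrak g_n(x)$ are $\mathfrak g_{2m}(x)=\prod_{i=1}^{m}(x^2-[2i-1]^2)$ and $\mathfrak g_{2m+1}(x)=x\prod_{i=1}^m(x^2-[2i-1]^2)$;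 $\mathfrak g^{(n)}=\mathfrak g_n/[n]!$. *)

theory Defs
  imports "HOL-Computational_Algebra.Polynomial"
begin

text \<open>The indeterminate q is modelled as an element of an arbitrary field of
characteristic 0 that is transcendental over the rationals (no nonzero integer
polynomial vanishes at q); the field Q(q) itself is such an instance.\<close>

definition q_transcendental :: "'a::field_char_0 \<Rightarrow> bool" where
  "q_transcendental q \<longleftrightarrow> (\<forall>p::int poly. p \<noteq> 0 \<longrightarrow> poly (map_poly of_int p) q \<noteq> 0)"

definition qint :: "'a::field \<Rightarrow> int \<Rightarrow> 'a" where
  "qint q n = (q powi n - q powi (-n)) / (q - inverse q)"

definition qfact :: "'a::field \<Rightarrow> nat \<Rightarrow> 'a" where
  "qfact q n = (\<Prod>i=1..n. qint q (int i))"

definition qbinom2 :: "'a::field \<Rightarrow> nat \<Rightarrow> nat \<Rightarrow> 'a" where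
  "qbinom2 q N a = qfact (q^2) N / (qfact (q^2) a * qfact (q^2) (N - a))"

fun pp :: "'a::field \<Rightarrow> nat \<Rightarrow> 'a poly" where
  "pp q 0 = 1"
| "pp q (Suc 0) = [:0, 1:]"
| "pp q (Suc (Suc n)) =
     [:0, 1:] * pp q (Suc n)
     + smult (q powi (2 - 2 * (int n + 1)) * qint q (int n + 1) * qint q (int n - 1)) (pp q n)"

definition pdiv :: "'a::field \<Rightarrow> nat \<Rightarrow> 'a poly" where
  "pdiv q n = smult (inverse (qfact q n)) (pp q n)"

definition gg :: "'a::field \<Rightarrow> nat \<Rightarrow> 'a poly" where
  "gg q n = (if even n then 1 else [:0, 1:]) *
     (\<Prod>i=1..n div 2. [:- ((qint q (2 * int i - 1))^2), 0, 1:])"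

definition gdiv :: "'a::field \<Rightarrow> nat \<Rightarrow> 'a poly" where
  "gdiv q n = smult (inverse (qfact q n)) (gg q n)"

definition in_Zq :: "'a::field_char_0 \<Rightarrow> 'a \<Rightarrow> bool" where
  "in_Zq q c \<longleftrightarrow> (\<exists>(f::int poly) (N::nat). c = poly (map_poly of_int f) q / q ^ N)"

end

theory Submission
  imports Defs
begin


lemma pw2: "(x::'a::field) powi (2*k) = (x powi k)^2"
  by (simp add: power_int_power' mult.commute)

lemma pwQ: "((x::'a::field)^2) powi k = x powi (2*k)"
  by (simp add: power_int_power)

lemma qint_alt: "qint q k = (q powi k - inverse (q powi k)) / (q - inverse q)"
  by (simp add: qint_def power_int_minus)

lemma trans_poly:
  fixes q :: "'a::field_char_0"
  assumes "q_transcendental q" "p \<noteq> 0"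
  shows "poly (map_poly of_int p) q \<noteq> 0"
  using assms unfolding q_transcendental_def by blast

lemma trans_nz: assumes "q_transcendental (q::'a::field_char_0)" shows "q \<noteq> 0"
proof -
  have "poly (map_poly of_int [:0::int, 1:]) q \<noteq> 0" by (rule trans_poly[OF assms]) simp
  thus ?thesis by (simp add: map_poly_pCons)
qed

lemma trans_pow_ne1: assumes "q_transcendental (q::'a::field_char_0)" "n > 0" shows "q ^ n \<noteq> 1"
proof -
  have "poly (map_poly of_int (pCons (-1::int) (monom 1 (n-1)))) q \<noteq> 0" by (rule trans_poly[OF assms(1)]) simp
  hence "-1 + q * q^(n-1) \<noteq> 0" by (simp add: map_poly_pCons map_poly_monom poly_monom)
  moreover have "q * q^(n-1) = q^n" using assms(2) by (cases n) auto
  ultimately show ?thesis by simp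
qed

lemma trans_pow_nem1: assumes "q_transcendental (q::'a::field_char_0)" "n > 0" shows "q ^ n \<noteq> -1"
proof -
  have "poly (map_poly of_int (pCons (1::int) (monom 1 (n-1)))) q \<noteq> 0" by (rule trans_poly[OF assms(1)]) simp
  hence "1 + q * q^(n-1) \<noteq> 0" by (simp add: map_poly_pCons map_poly_monom poly_monom)
  moreover have "q * q^(n-1) = q^n" using assms(2) by (cases n) auto
  ultimately show ?thesis by (auto simp: eq_neg_iff_add_eq_0 add.commute)
qed

lemma trans_powi_ne1: assumes "q_transcendental (q::'a::field_char_0)" "k \<noteq> 0" shows "q powi k \<noteq> 1"
proof (cases "k > 0")
  case True
  then show ?thesis using trans_pow_ne1[OF assms(1), of "nat k"] by (simp add: power_int_nonneg_exp)
next
  case False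
  hence "q powi k = inverse (q ^ nat (-k))" using assms(2)
    by (metis add.inverse_inverse le_less neg_0_le_iff_le not_less power_int_minus power_int_nonneg_exp)
  then show ?thesis using trans_pow_ne1[OF assms(1), of "nat (-k)"] False assms(2) by auto
qed

lemma trans_powi_nem1: assumes "q_transcendental (q::'a::field_char_0)" "k \<noteq> 0" shows "q powi k \<noteq> -1"
proof (cases "k > 0")
  case True
  then show ?thesis using trans_pow_nem1[OF assms(1), of "nat k"] by (simp add: power_int_nonneg_exp)
next
  case False
  hence "q powi k = inverse (q ^ nat (-k))" using assms(2)
    by (metis add.inverse_inverse le_less neg_0_le_iff_le not_less power_int_minus power_int_nonneg_exp)
  then show ?thesis using trans_pow_nem1[OF assms(1), of "nat (-k)"] False assms(2)
    by (metis inverse_eq_iff_eq inverse_minus_eq inverse_1 zero_less_nat_eq neg_0_less_iff_less not_less_iff_gr_or_eq)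
qed

lemma qq_nz: assumes "q_transcendental (q::'a::field_char_0)" shows "q - inverse q \<noteq> 0"
proof
  assume "q - inverse q = 0"
  hence "q * q = 1" using trans_nz[OF assms] by (simp add: field_simps)
  thus False using trans_pow_ne1[OF assms, of 2] by (simp add: power2_eq_square)
qed

lemma qint_nz: assumes "q_transcendental (q::'a::field_char_0)" "k \<noteq> 0" shows "qint q k \<noteq> 0"
proof
  assume "qint q k = 0"
  hence "q powi k = inverse (q powi k)" using qq_nz[OF assms(1)] by (simp add: qint_alt)
  hence "q powi k * q powi k = 1" using trans_nz[OF assms(1)]
    by (metis power_int_not_zero right_inverse)
  hence "q powi (2*k) = 1" by (simp add: pw2 power2_eq_square)
  thus False using trans_powi_ne1[OF assms(1), of "2*k"] assms(2) by simp
qed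

lemma qintQ_nz: assumes "q_transcendental (q::'a::field_char_0)" "k \<noteq> 0" shows "qint (q^2) k \<noteq> 0"
proof
  have q0: "q \<noteq> 0" using trans_nz[OF assms(1)] .
  have Qn: "q^2 - inverse (q^2) \<noteq> 0"
  proof
    assume "q^2 - inverse (q^2) = 0"
    hence "q^2 * q^2 = 1" using q0 by (simp add: field_simps)
    hence "q^4 = 1" by (simp add: power_add[symmetric])
    thus False using trans_pow_ne1[OF assms(1), of 4] by simp
  qed
  assume "qint (q^2) k = 0"
  hence "(q^2) powi k = inverse ((q^2) powi k)" using Qn by (simp add: qint_alt)
  hence "(q^2) powi k * (q^2) powi k = 1" using q0
    by (metis power_int_not_zero right_inverse zero_eq_power2)
  hence "q powi (2*k) * q powi (2*k) = 1" by (simp only: pwQ)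
  moreover have "q powi (4*k) = q powi (2*k) * q powi (2*k)" using power_int_add[of q "2*k" "2*k"] q0 by simp
  ultimately have "q powi (4*k) = 1" by simp
  thus False using trans_powi_ne1[OF assms(1), of "4*k"] assms(2) by simp
qed


lemma qfact_Suc: "qfact q (Suc n) = qfact q n * qint q (int n + 1)"
  by (simp add: qfact_def add.commute)

lemma qfact_0[simp]: "qfact q 0 = 1"
  by (simp add: qfact_def)

lemma qfact_nz: assumes "q_transcendental (q::'a::field_char_0)" shows "qfact q n \<noteq> 0"
  by (induction n) (auto simp: qfact_Suc qint_nz[OF assms])

lemma qfactQ_nz: assumes "q_transcendental (q::'a::field_char_0)" shows "qfact (q^2) n \<noteq> 0"
  by (induction n) (auto simp: qfact_Suc qintQ_nz[OF assms] simp del: power_Suc)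

lemma pdiv_rec:
  assumes T: "q_transcendental (q::'a::field_char_0)"
  shows "smult (qint q (int n + 2)) (pdiv q (n+2)) = [:0,1:] * pdiv q (n+1)
           + smult (q powi (-2*int n) * qint q (int n - 1)) (pdiv q n)"
proof -
  define F where "F = qfact q n"
  define a where "a = qint q (int n + 1)"
  define b where "b = qint q (int n + 2)"
  have F0: "F \<noteq> 0" unfolding F_def by (rule qfact_nz[OF T])
  have a0: "a \<noteq> 0" unfolding a_def by (rule qint_nz[OF T]) simp
  have b0: "b \<noteq> 0" unfolding b_def by (rule qint_nz[OF T]) simp
  have f1: "qfact q (n+1) = F * a" by (simp only: F_def a_def qfact_Suc Suc_eq_plus1[symmetric])
  have f2: "qfact q (n+2) = F * a * b"
  proof -
    have "qfact q (n+2) = qfact q (n+1) * qint q (int (n+1) + 1)"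
      by (metis qfact_Suc add_2_eq_Suc' Suc_eq_plus1)
    also have "int (n+1) + 1 = int n + 2" by simp
    finally show ?thesis using f1 b_def by simp
  qed
  have pp2: "pp q (n+2) = [:0,1:] * pp q (n+1) + smult (q powi (-2*int n) * a * qint q (int n - 1)) (pp q n)"
  proof -
    have "pp q (Suc (Suc n)) = [:0,1:] * pp q (Suc n) + smult (q powi (-2*int n) * a * qint q (int n - 1)) (pp q n)"
      by (simp add: a_def algebra_simps)
    thus ?thesis by (metis Suc_eq_plus1 add_2_eq_Suc')
  qed
  show ?thesis
    unfolding pdiv_def f1 f2 pp2 b_def[symmetric]
    using F0 a0 b0
    by (simp add: smult_add_right mult_smult_right field_simps Suc_eq_plus1_left[symmetric] F_def)
qed

lemma gg_odd: "gg q (2*k+1) = [:0,1:] * gg q (2*k)"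
  by (simp add: gg_def)

lemma gg_even: "gg q (2*k+2) = [:- ((qint q (2 * int k + 1))^2), 0, 1:] * gg q (2*k)"
proof -
  have "(2*k+2) div 2 = Suc k" by simp
  thus ?thesis by (simp add: gg_def algebra_simps)
qed

lemma GH1: assumes T: "q_transcendental (q::'a::field_char_0)"
  shows "[:0,1:] * gdiv q (2*k) = smult (qint q (2*int k+1)) (gdiv q (2*k+1))"
proof -
  have f: "qfact q (2*k+1) = qfact q (2*k) * qint q (2*int k+1)" by (simp only: qfact_Suc Suc_eq_plus1[symmetric]) simp
  show ?thesis unfolding gdiv_def f gg_odd
    using qfact_nz[OF T, of "2*k"] qint_nz[OF T, of "2*int k+1"]
    by (simp add: mult_smult_right mult.commute mult.left_commute)
qed

lemma GH2: assumes T: "q_transcendental (q::'a::field_char_0)"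
  shows "[:0,1:] * gdiv q (2*k+1) = smult (qint q (2*int k+2)) (gdiv q (2*k+2))
     + smult (qint q (2*int k+1)) (gdiv q (2*k))"
proof -
  define F where "F = qfact q (2*k)"
  define a where "a = qint q (2*int k + 1)"
  define b where "b = qint q (2*int k + 2)"
  have F0: "F \<noteq> 0" unfolding F_def by (rule qfact_nz[OF T])
  have a0: "a \<noteq> 0" unfolding a_def by (rule qint_nz[OF T]) simp
  have b0: "b \<noteq> 0" unfolding b_def by (rule qint_nz[OF T]) simp
  have f1: "qfact q (2*k+1) = F * a" by (simp only: F_def a_def qfact_Suc Suc_eq_plus1[symmetric]) simp
  have f2: "qfact q (2*k+2) = F * a * b"
  proof -
    have "2*k+2 = Suc (2*k+1)" by simp
    hence "qfact q (2*k+2) = qfact q (2*k+1) * qint q (int (2*k+1) + 1)" by (simp only: qfact_Suc)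
    also have "int (2*k+1) + 1 = 2 * int k + 2" by simp
    finally show ?thesis using f1 b_def by simp
  qed
  define G0 where "G0 = smult (inverse F) (gg q (2*k))"
  have e0: "gdiv q (2*k) = G0" by (simp add: gdiv_def G0_def F_def)
  have e1: "gdiv q (2*k+1) = smult (inverse a) ([:0,1:] * G0)"
    unfolding gdiv_def G0_def f1 gg_odd by (simp add: mult_smult_right mult.commute)
  have e2: "gdiv q (2*k+2) = smult (inverse (a*b)) ([:0,1:] * ([:0,1:] * G0) - smult (a^2) G0)"
  proof -
    have X2: "[:- (a^2), 0, 1:] * g = [:0,1:] * ([:0,1:] * g) - smult (a^2) g" for g
      by (simp add: algebra_simps)
    have ge: "gg q (2*k+2) = [:- (a^2), 0, 1:] * gg q (2*k)" by (simp only: gg_even a_def)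
    have "gdiv q (2*k+2) = smult (inverse (a*b)) (smult (inverse F) ([:- (a^2), 0, 1:] * gg q (2*k)))"
      unfolding gdiv_def f2 ge F_def by (simp add: mult.commute mult.left_commute mult.assoc)
    also have "\<dots> = smult (inverse (a*b)) ([:0,1:] * ([:0,1:] * G0) - smult (a^2) G0)"
      unfolding X2 G0_def by (simp add: smult_diff_right mult_smult_right mult.commute)
    finally show ?thesis .
  qed
  have s1: "b * inverse a * inverse b = inverse a" using b0 by (simp add: field_simps)
  have s2: "b * inverse a * inverse b * a^2 = a" using a0 b0 by (simp add: field_simps power2_eq_square)
  have s3: "inverse a * a^2 = a" using a0 by (simp add: field_simps power2_eq_square)
  show ?thesis unfolding e0 e1 e2 a_def[symmetric] b_def[symmetric]
    by (simp add: smult_diff_right s1 s2 s3 mult_smult_right flip: mult.assoc)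
qed


lemma K1:
  fixes q :: "'a::field" and a m :: int
  assumes q0: "q \<noteq> 0" and q1: "q - inverse q \<noteq> 0" and q2: "q^2 - inverse (q^2) \<noteq> 0"
  shows "qint (q^2) m * qint q (2*m+2) = qint (q^2) (m-a) * qint q (2*m-2*a+2)
     + q powi (2*m-1) * qint (q^2) a * qint q (2*m-2*a+3) + q powi (2*a-2*m-3) * qint q (2*m-1) * qint (q^2) a"
proof -
  define N where "N = (\<lambda>k. q powi k - inverse (q powi k))"
  define d1 where "d1 = q - inverse q"
  define d2 where "d2 = q^2 - inverse (q^2)"
  have e1: "qint q k = N k / d1" for k by (simp add: qint_alt N_def d1_def)
  have e2: "qint (q^2) k = N (2*k) / d2" for k by (simp add: qint_alt N_def d2_def pwQ)
  define u where "u = q powi a"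
  define v where "v = q powi m"
  have u0: "u \<noteq> 0" and v0: "v \<noteq> 0" using q0 by (auto simp: u_def v_def)
  have H: "N (2*m) * N (2*m+2) = N (2*(m-a)) * N (2*m-2*a+2) + q powi (2*m-1) * N (2*a) * N (2*m-2*a+3)
     + q powi (2*a-2*m-3) * N (2*m-1) * N (2*a)"
    unfolding N_def
    using q0 u0 v0
    apply (simp add: power_int_add power_int_diff pw2 power_int_minus right_diff_distrib flip: u_def v_def)
    apply (simp add: field_simps)
    apply algebra
    done
  have nd1: "d1 \<noteq> 0" and nd2: "d2 \<noteq> 0" using q1 q2 by (auto simp: d1_def d2_def)
  show ?thesis unfolding e1 e2 using nd1 nd2 H
    by (simp add: field_simps)
qed


lemma qbinom2_0: assumes T: "q_transcendental (q::'a::field_char_0)" shows "qbinom2 q n 0 = 1"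
  using qfactQ_nz[OF T] by (simp add: qbinom2_def)

lemma qint_0[simp]: "qint q 0 = 0"
  by (simp add: qint_def)

lemma powi_shift: assumes "(q::'a::field) \<noteq> 0" "x = y + z" shows "q powi x = q powi y * q powi z"
  using assms by (simp add: power_int_add)

lemma BP1:
  assumes T: "q_transcendental (q::'a::field_char_0)" and a: "a \<le> n"
  shows "qint (q^2) (int n + 1) * qbinom2 q n a = qint (q^2) (int n + 1 - int a) * qbinom2 q (Suc n) a"
proof -
  have e1: "Suc n - a = Suc (n - a)" using a by simp
  have e2: "int (n - a) + 1 = int n + 1 - int a" using a by simp
  show ?thesis
    unfolding qbinom2_def e1 qfact_Suc e2
    using qfactQ_nz[OF T] qintQ_nz[OF T, of "int n + 1 - int a"] a
    by (simp add: field_simps)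
qed

lemma BP2:
  assumes T: "q_transcendental (q::'a::field_char_0)" and a: "a \<le> n"
  shows "qint (q^2) (int n + 1) * qbinom2 q n a = qint (q^2) (int a + 1) * qbinom2 q (Suc n) (Suc a)"
proof -
  show ?thesis
    unfolding qbinom2_def qfact_Suc
    using qfactQ_nz[OF T] qintQ_nz[OF T, of "int a + 1"] a
    by (simp add: field_simps)
qed

lemma C1:
  assumes T: "q_transcendental (q::'a::field_char_0)" and m: "m \<ge> 1" and a: "a < Suc m"
  shows "qint q (int (2*m) + 2) * (q powi ((3 - 2 * int (Suc m)) * int a) * qbinom2 q (Suc m - 1) a) =
     (if a < m then q powi ((1 - 2*int m) * int a) * qbinom2 q (m-1) a * qint q (2*int (m-a)+2) else 0)
   + (if a = 0 then 0 else q powi ((1 - 2*int m) * int (a-1)) * qbinom2 q (m-1) (a-1) * qint q (2*int (m-(a-1))+1)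
       + q powi (-2*int(2*m)) * qint q (int(2*m) - 1) * (q powi ((3 - 2*int m) * int (a-1)) * qbinom2 q (m-1) (a-1)))"
proof (cases "a = 0")
  case True
  then show ?thesis using m qbinom2_0[OF T] by simp
next
  case False
  have q0: "q \<noteq> 0" by (rule trans_nz[OF T])
  obtain n where n: "m = Suc n" using m by (cases m) auto
  obtain b where b: "a = Suc b" using False by (cases a) auto
  have bn: "b \<le> n" using a n b by simp
  define B where "B = qbinom2 q m a"
  define P where "P = q powi ((1 - 2*int m) * int a)"
  define Qm where "Qm = qint (q^2) (int m)"
  have Qm0: "Qm \<noteq> 0" unfolding Qm_def by (rule qintQ_nz[OF T]) (use m in simp)
  have U1: "Qm * (if a<m then qbinom2 q (m-1) a else 0) = qint (q^2) (int m - int a) * B"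
  proof (cases "a < m")
    case True
    then show ?thesis using BP1[OF T, of a n] n b unfolding Qm_def B_def by (simp add: add.commute)
  next
    case False
    then have "a = m" using a by simp
    then show ?thesis by simp
  qed
  have U2: "Qm * qbinom2 q (m-1) (a-1) = qint (q^2) (int a) * B"
    using BP2[OF T bn] n b unfolding Qm_def B_def by (simp add: add.commute)
  have x1: "q powi ((3 - 2 * int (Suc m)) * int a) = P"
    unfolding P_def by (rule arg_cong[where f="\<lambda>x. q powi x"]) (simp add: algebra_simps)
  have x2: "q powi ((1 - 2*int m) * int (a-1)) = P * q powi (2*int m - 1)"
    unfolding P_def by (rule powi_shift[OF q0]) (use b in \<open>simp add: algebra_simps\<close>)
  have x3: "q powi (-2*int(2*m)) * q powi ((3 - 2*int m) * int (a-1)) = P * q powi (2*int a - 2*int m - 3)"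
  proof -
    have "q powi (-2*int(2*m)) * q powi ((3 - 2*int m) * int (a-1)) = q powi (-2*int(2*m) + (3 - 2*int m) * int (a-1))"
      using power_int_add[of q "-2*int(2*m)" "(3 - 2*int m) * int (a-1)"] q0 by simp
    also have "\<dots> = P * q powi (2*int a - 2*int m - 3)"
      unfolding P_def by (rule powi_shift[OF q0]) (use b in \<open>simp add: algebra_simps\<close>)
    finally show ?thesis .
  qed
  have X1: "qint q (2*int (m-a)+2) = qint q (2*int m - 2*int a + 2)" using a
  proof -
    have "2*int (m-a)+2 = 2*int m - 2*int a + 2" using a by (simp add: of_nat_diff)
    thus ?thesis by (simp only:)
  qed
  have X2: "qint q (2*int (m-(a-1))+1) = qint q (2*int m - 2*int a + 3)"
  proof -
    have "2*int (m-(a-1))+1 = 2*int m - 2*int a + 3" using a b by (simp add: of_nat_diff)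
    thus ?thesis by (simp only:)
  qed
  have K: "qint (q^2) (int m) * qint q (2*int m+2) = qint (q^2) (int m - int a) * qint q (2*int m-2*int a+2)
     + q powi (2*int m-1) * qint (q^2) (int a) * qint q (2*int m-2*int a+3)
     + q powi (2*int a-2*int m-3) * qint q (2*int m-1) * qint (q^2) (int a)"
    by (rule K1[OF q0 qq_nz[OF T]]) (use qintQ_nz[OF T, of 1] in \<open>auto simp: qint_def split: if_splits\<close>)
  have R1: "(if a < m then q powi ((1 - 2*int m) * int a) * qbinom2 q (m-1) a * qint q (2*int (m-a)+2) else 0)
     = P * qint q (2*int m - 2*int a + 2) * (if a<m then qbinom2 q (m-1) a else 0)"
    unfolding P_def X1 by simp
  have R2: "q powi ((1 - 2*int m) * int (a-1)) * qbinom2 q (m-1) (a-1) * qint q (2*int (m-(a-1))+1)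
       + q powi (-2*int(2*m)) * qint q (int(2*m) - 1) * (q powi ((3 - 2*int m) * int (a-1)) * qbinom2 q (m-1) (a-1))
     = P * (q powi (2*int m - 1) * qint q (2*int m - 2*int a + 3) + q powi (2*int a - 2*int m - 3) * qint q (2*int m - 1))
        * qbinom2 q (m-1) (a-1)"
    unfolding X2 x2 using x3 by (simp add: algebra_simps)
  have "Qm * (qint q (int (2*m) + 2) * (q powi ((3 - 2 * int (Suc m)) * int a) * qbinom2 q (Suc m - 1) a)) =
     Qm * ((if a < m then q powi ((1 - 2*int m) * int a) * qbinom2 q (m-1) a * qint q (2*int (m-a)+2) else 0)
   + (q powi ((1 - 2*int m) * int (a-1)) * qbinom2 q (m-1) (a-1) * qint q (2*int (m-(a-1))+1)
       + q powi (-2*int(2*m)) * qint q (int(2*m) - 1) * (q powi ((3 - 2*int m) * int (a-1)) * qbinom2 q (m-1) (a-1))))"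
  proof -
    have l: "Qm * (qint q (int (2*m) + 2) * (q powi ((3 - 2 * int (Suc m)) * int a) * qbinom2 q (Suc m - 1) a))
       = P * B * (qint (q^2) (int m) * qint q (2*int m+2))"
      unfolding x1 B_def Qm_def by simp
    have r: "Qm * ((if a < m then q powi ((1 - 2*int m) * int a) * qbinom2 q (m-1) a * qint q (2*int (m-a)+2) else 0)
   + (q powi ((1 - 2*int m) * int (a-1)) * qbinom2 q (m-1) (a-1) * qint q (2*int (m-(a-1))+1)
       + q powi (-2*int(2*m)) * qint q (int(2*m) - 1) * (q powi ((3 - 2*int m) * int (a-1)) * qbinom2 q (m-1) (a-1))))
      = P * qint q (2*int m - 2*int a + 2) * (Qm * (if a<m then qbinom2 q (m-1) a else 0))
        + P * (q powi (2*int m - 1) * qint q (2*int m - 2*int a + 3) + q powi (2*int a - 2*int m - 3) * qint q (2*int m - 1))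
        * (Qm * qbinom2 q (m-1) (a-1))"
      unfolding R1 R2 by (simp add: algebra_simps)
    show ?thesis unfolding l r U1 U2 K by (simp add: algebra_simps)
  qed
  then show ?thesis using Qm0 False by simp
qed

lemma K2:
  fixes q :: "'a::field" and a m :: int
  assumes q0: "q \<noteq> 0" and q1: "q - inverse q \<noteq> 0" and q2: "q^2 - inverse (q^2) \<noteq> 0"
  shows "qint (q^2) m * qint q (2*m+3) * q powi (-2*a) = qint (q^2) m * qint q (2*m+3-2*a)
     + q powi (-2*m-3) * qint q (2*m) * qint (q^2) a"
proof -
  define N where "N = (\<lambda>k. q powi k - inverse (q powi k))"
  define d1 where "d1 = q - inverse q"
  define d2 where "d2 = q^2 - inverse (q^2)"
  have e1: "qint q k = N k / d1" for k by (simp add: qint_alt N_def d1_def)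
  have e2: "qint (q^2) k = N (2*k) / d2" for k by (simp add: qint_alt N_def d2_def pwQ)
  define u where "u = q powi a"
  define v where "v = q powi m"
  have u0: "u \<noteq> 0" and v0: "v \<noteq> 0" using q0 by (auto simp: u_def v_def)
  have H: "N (2*m) * N (2*m+3) * q powi (-2*a) = N (2*m) * N (2*m+3-2*a)
     + q powi (-2*m-3) * N (2*m) * N (2*a)"
    unfolding N_def
    using q0 u0 v0
    apply (simp add: power_int_add power_int_diff pw2 power_int_minus right_diff_distrib flip: u_def v_def)
    apply (simp add: field_simps)
    apply algebra
    done
  have nd1: "d1 \<noteq> 0" and nd2: "d2 \<noteq> 0" using q1 q2 by (auto simp: d1_def d2_def)
  show ?thesis unfolding e1 e2 using nd1 nd2 H
    by (simp add: field_simps)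
qed

lemma C2:
  assumes T: "q_transcendental (q::'a::field_char_0)" and m: "m \<ge> 1" and a: "a < Suc m"
  shows "qint q (int (2*m+1) + 2) * (q powi ((1 - 2 * int (Suc m)) * int a) * qbinom2 q (Suc m - 1) a) =
     q powi ((3 - 2*int (Suc m)) * int a) * qbinom2 q (Suc m - 1) a * qint q (2*int (Suc m - a)+1)
   + (if a = 0 then 0 else q powi (-2*int(2*m+1)) * qint q (int(2*m+1) - 1) * (q powi ((1 - 2*int m) * int (a-1)) * qbinom2 q (m-1) (a-1)))"
proof (cases "a = 0")
  case True
  then show ?thesis using m qbinom2_0[OF T] by simp
next
  case False
  have q0: "q \<noteq> 0" by (rule trans_nz[OF T])
  obtain n where n: "m = Suc n" using m by (cases m) auto
  obtain b where b: "a = Suc b" using False by (cases a) auto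
  have bn: "b \<le> n" using a n b by simp
  define B where "B = qbinom2 q m a"
  define P where "P = q powi ((1 - 2*int m) * int a)"
  define Qm where "Qm = qint (q^2) (int m)"
  have Qm0: "Qm \<noteq> 0" unfolding Qm_def by (rule qintQ_nz[OF T]) (use m in simp)
  have U2: "Qm * qbinom2 q (m-1) (a-1) = qint (q^2) (int a) * B"
    using BP2[OF T bn] n b unfolding Qm_def B_def by (simp add: add.commute)
  have x1: "q powi ((3 - 2 * int (Suc m)) * int a) = P"
    unfolding P_def by (rule arg_cong[where f="\<lambda>x. q powi x"]) (simp add: algebra_simps)
  have x0: "q powi ((1 - 2 * int (Suc m)) * int a) = P * q powi (-2 * int a)"
    unfolding P_def by (rule powi_shift[OF q0]) (simp add: algebra_simps)
  have x3: "q powi (-2*int(2*m+1)) * q powi ((1 - 2*int m) * int (a-1)) = P * q powi (-2*int m - 3)"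
  proof -
    have "q powi (-2*int(2*m+1)) * q powi ((1 - 2*int m) * int (a-1)) = q powi (-2*int(2*m+1) + (1 - 2*int m) * int (a-1))"
      using power_int_add[of q "-2*int(2*m+1)" "(1 - 2*int m) * int (a-1)"] q0 by simp
    also have "\<dots> = P * q powi (-2*int m - 3)"
      unfolding P_def by (rule powi_shift[OF q0]) (use b in \<open>simp add: algebra_simps\<close>)
    finally show ?thesis .
  qed
  have X1: "qint q (2*int (Suc m - a)+1) = qint q (2*int m + 3 - 2*int a)"
  proof -
    have "2*int (Suc m - a)+1 = 2*int m + 3 - 2*int a" using a by (simp add: of_nat_diff)
    thus ?thesis by (simp only:)
  qed
  have K: "qint (q^2) (int m) * qint q (2*int m+3) * q powi (-2*int a) = qint (q^2) (int m) * qint q (2*int m+3-2*int a)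
     + q powi (-2*int m-3) * qint q (2*int m) * qint (q^2) (int a)"
    by (rule K2[OF q0 qq_nz[OF T]]) (use qintQ_nz[OF T, of 1] in \<open>auto simp: qint_def split: if_splits\<close>)
  have "Qm * (qint q (int (2*m+1) + 2) * (q powi ((1 - 2 * int (Suc m)) * int a) * qbinom2 q (Suc m - 1) a)) =
     Qm * (q powi ((3 - 2*int (Suc m)) * int a) * qbinom2 q (Suc m - 1) a * qint q (2*int (Suc m - a)+1)
   + (q powi (-2*int(2*m+1)) * qint q (int(2*m+1) - 1) * (q powi ((1 - 2*int m) * int (a-1)) * qbinom2 q (m-1) (a-1))))"
  proof -
    have l: "Qm * (qint q (int (2*m+1) + 2) * (q powi ((1 - 2 * int (Suc m)) * int a) * qbinom2 q (Suc m - 1) a))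
       = P * B * (qint (q^2) (int m) * qint q (2*int m+3) * q powi (-2*int a))"
      unfolding x0 B_def Qm_def by (simp add: algebra_simps)
    have r: "Qm * (q powi ((3 - 2*int (Suc m)) * int a) * qbinom2 q (Suc m - 1) a * qint q (2*int (Suc m - a)+1)
   + (q powi (-2*int(2*m+1)) * qint q (int(2*m+1) - 1) * (q powi ((1 - 2*int m) * int (a-1)) * qbinom2 q (m-1) (a-1))))
      = P * B * (qint (q^2) (int m) * qint q (2*int m+3-2*int a)) +
        P * q powi (-2*int m - 3) * qint q (2*int m) * (Qm * qbinom2 q (m-1) (a-1))"
    proof -
      have "q powi (-2*int(2*m+1)) * qint q (int(2*m+1) - 1) * (q powi ((1 - 2*int m) * int (a-1)) * qbinom2 q (m-1) (a-1))
         = (q powi (-2*int(2*m+1)) * q powi ((1 - 2*int m) * int (a-1))) * qint q (2*int m) * qbinom2 q (m-1) (a-1)"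
        by (simp add: algebra_simps)
      also have "\<dots> = P * q powi (-2*int m - 3) * qint q (2*int m) * qbinom2 q (m-1) (a-1)" unfolding x3 ..
      finally have t: "q powi (-2*int(2*m+1)) * qint q (int(2*m+1) - 1) * (q powi ((1 - 2*int m) * int (a-1)) * qbinom2 q (m-1) (a-1))
         = P * q powi (-2*int m - 3) * qint q (2*int m) * qbinom2 q (m-1) (a-1)" .
      show ?thesis unfolding t x1 X1 B_def Qm_def by (simp add: algebra_simps)
    qed
    show ?thesis unfolding l r U2 K by (simp add: algebra_simps)
  qed
  then show ?thesis using Qm0 False by simp
qed


lemma mp_add: "map_poly (of_int :: int \<Rightarrow> 'a::ring_1) (f + g) = map_poly of_int f + map_poly of_int g"
  by (rule poly_eqI) (simp add: coeff_map_poly)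

lemma mp_uminus: "map_poly (of_int :: int \<Rightarrow> 'a::ring_1) (- f) = - map_poly of_int f"
  by (rule poly_eqI) (simp add: coeff_map_poly)

lemma mp_mult: "map_poly (of_int :: int \<Rightarrow> 'a::comm_ring_1) (f * g) = map_poly of_int f * map_poly of_int g"
proof (induction f)
  case 0
  then show ?case by simp
next
  case (pCons a f)
  have "map_poly (of_int :: int \<Rightarrow> 'a) (pCons a f * g) = map_poly of_int (smult a g + pCons 0 (f * g))" by simp
  also have "\<dots> = smult (of_int a) (map_poly of_int g) + pCons 0 (map_poly of_int f * map_poly of_int g)"
    unfolding mp_add using pCons.IH by (simp add: map_poly_smult map_poly_pCons)
  also have "\<dots> = map_poly (of_int :: int \<Rightarrow> 'a) (pCons a f) * map_poly of_int g"
    by (simp add: map_poly_pCons)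
  finally show ?case .
qed

lemma ev_monom: "poly (map_poly (of_int :: int \<Rightarrow> 'a::comm_ring_1) (monom 1 n)) x = x ^ n"
  by (simp add: map_poly_monom poly_monom)

lemma ev_const: "poly (map_poly (of_int :: int \<Rightarrow> 'a::comm_ring_1) [:k:]) x = of_int k"
  by (simp add: map_poly_pCons)

context
  fixes q :: "'a::field_char_0"
  assumes q0: "q \<noteq> 0"
begin

lemma Z_add: assumes "in_Zq q c" "in_Zq q d" shows "in_Zq q (c + d)"
proof -
  obtain f N where f: "c = poly (map_poly of_int f) q / q ^ N" using assms(1) unfolding in_Zq_def by blast
  obtain g M where g: "d = poly (map_poly of_int g) q / q ^ M" using assms(2) unfolding in_Zq_def by blast
  have "c + d = poly (map_poly of_int (f * monom 1 M + g * monom 1 N)) q / q ^ (N + M)"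
    unfolding f g mp_add mp_mult using q0 by (simp add: map_poly_monom poly_monom field_simps power_add)
  thus ?thesis unfolding in_Zq_def by blast
qed

lemma Z_mult: assumes "in_Zq q c" "in_Zq q d" shows "in_Zq q (c * d)"
proof -
  obtain f N where f: "c = poly (map_poly of_int f) q / q ^ N" using assms(1) unfolding in_Zq_def by blast
  obtain g M where g: "d = poly (map_poly of_int g) q / q ^ M" using assms(2) unfolding in_Zq_def by blast
  have "c * d = poly (map_poly of_int (f * g)) q / q ^ (N + M)"
    unfolding f g mp_mult using q0 by (simp add: power_add)
  thus ?thesis unfolding in_Zq_def by blast
qed

lemma Z_uminus: assumes "in_Zq q c" shows "in_Zq q (- c)"
proof -
  obtain f N where f: "c = poly (map_poly of_int f) q / q ^ N" using assms(1) unfolding in_Zq_def by blast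
  have "- c = poly (map_poly of_int (- f)) q / q ^ N"
    unfolding f mp_uminus by simp
  thus ?thesis unfolding in_Zq_def by blast
qed

lemma Z_diff: assumes "in_Zq q c" "in_Zq q d" shows "in_Zq q (c - d)"
  using Z_add[OF assms(1) Z_uminus[OF assms(2)]] by simp

lemma Z_of_int: "in_Zq q (of_int k)"
proof -
  have "of_int k = poly (map_poly of_int [:k:]) q / q ^ 0" by (simp add: map_poly_pCons)
  thus ?thesis unfolding in_Zq_def by blast
qed

lemma Z_0: "in_Zq q 0" using Z_of_int[of 0] by simp
lemma Z_1: "in_Zq q 1" using Z_of_int[of 1] by simp

lemma Z_powi: "in_Zq q (q powi k)"
proof (cases "k \<ge> 0")
  case True
  have "q powi k = poly (map_poly of_int (monom 1 (nat k))) q / q ^ 0"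
    using True by (simp add: ev_monom power_int_nonneg_exp)
  thus ?thesis unfolding in_Zq_def by blast
next
  case False
  have "q powi k = inverse (q powi (-k))" by (simp add: power_int_minus)
  also have "\<dots> = poly (map_poly of_int 1) q / q ^ (nat (-k))"
    using False by (simp add: power_int_nonneg_exp divide_inverse)
  finally show ?thesis unfolding in_Zq_def by blast
qed

lemma Z_sum: "(\<And>i. i \<in> S \<Longrightarrow> in_Zq q (f i)) \<Longrightarrow> in_Zq q (\<Sum>i\<in>S. f i)"
  by (induction S rule: infinite_finite_induct) (auto intro: Z_add Z_0)

lemma Z_prod: "(\<And>i. i \<in> S \<Longrightarrow> in_Zq q (f i)) \<Longrightarrow> in_Zq q (\<Prod>i\<in>S. f i)"
  by (induction S rule: infinite_finite_induct) (auto intro: Z_mult Z_1)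

lemma aux_div: "(B*C - D)/(d::'b::field) = B*(C/d) - D/d"
  by (simp add: diff_divide_distrib)

lemma qint_rec: assumes "(r::'a) \<noteq> 0" "r - inverse r \<noteq> 0"
  shows "qint r (k+1) = (r + inverse r) * qint r k - qint r (k-1)"
proof -
  have d: "r - inverse r \<noteq> 0" by fact
  have a: "r powi (k+1) = r powi k * r" and b: "r powi (k-1) = r powi k * inverse r"
    using assms(1) by (simp_all add: power_int_add power_int_diff divide_inverse)
  define t where "t = r powi k"
  have t0: "t \<noteq> 0" using assms(1) by (simp add: t_def)
  have N: "t*r - inverse (t*r) = (r + inverse r)*(t - inverse t) - (t*inverse r - inverse (t * inverse r))"
    using t0 assms(1) by (simp add: field_simps)
  show ?thesis unfolding qint_alt a b t_def[symmetric] N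
    by (rule aux_div)
qed

lemma qint_neg: "qint r (-k) = - qint r k"
  by (simp add: qint_def minus_divide_left)

lemma Z_qint_gen:
  assumes r0: "r \<noteq> 0" and r1: "r - inverse r \<noteq> 0" and Zr: "in_Zq q r" and Zri: "in_Zq q (inverse r)"
  shows "in_Zq q (qint r k)"
proof -
  have A: "in_Zq q (qint r (int n)) \<and> in_Zq q (qint r (int n + 1))" for n
  proof (induction n)
    case 0
    have "qint r 1 = 1" using r1 by (simp add: qint_def power_int_minus)
    moreover have "qint r 0 = 0" by (simp add: qint_def)
    ultimately show ?case using Z_0 Z_1 q0 by simp
  next
    case (Suc n)
    have "qint r (int n + 1 + 1) = (r + inverse r) * qint r (int n + 1) - qint r (int n)"
      using qint_rec[OF r0 r1, of "int n + 1"] by simp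
    hence "in_Zq q (qint r (int n + 1 + 1))"
      using Suc.IH by (auto intro!: Z_diff Z_mult Z_add Zr Zri)
    then show ?case using Suc.IH by (simp add: add.commute add.left_commute)
  qed
  show ?thesis
  proof (cases "k \<ge> 0")
    case True
    then show ?thesis using A[of "nat k"] by simp
  next
    case False
    have "qint r k = - qint r (int (nat (-k)))" using False qint_neg[of r "-k"] by simp
    then show ?thesis using A[of "nat (-k)"] Z_uminus by simp
  qed
qed

lemma Z_qint: assumes "q_transcendental q" shows "in_Zq q (qint q k)"
  by (rule Z_qint_gen[OF q0 qq_nz[OF assms]]) (use Z_powi[of 1] Z_powi[of "-1"] in \<open>simp_all add: power_int_minus\<close>)

lemma Z_qintQ: assumes "q_transcendental q" shows "in_Zq q (qint (q^2) k)"
proof (rule Z_qint_gen)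
  show "q^2 \<noteq> 0" using q0 by simp
  show "q^2 - inverse (q^2) \<noteq> 0" using qintQ_nz[OF assms, of 1] by (auto simp: qint_def)
  show "in_Zq q (q^2)" using Z_powi[of 2] by simp
  show "in_Zq q (inverse (q^2))" using Z_powi[of "-2"] by (simp add: power_int_minus)
qed

end


definition gb :: "'a::field \<Rightarrow> int \<Rightarrow> nat \<Rightarrow> 'a" where
  "gb r N k = (\<Prod>i<k. qint r (N - int i)) / qfact r k"

lemma aux_div2: "(B*C + E*F)/(d::'b::field) = B*(C/d) + E*(F/d)"
  by (simp add: add_divide_distrib)

lemma qint_add: assumes "(r::'a::field) \<noteq> 0"
  shows "qint r (a+b) = r powi b * qint r a + r powi (-a) * qint r b"
proof -
  define ua where "ua = r powi a"
  define ub where "ub = r powi b"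
  have u0: "ua \<noteq> 0" "ub \<noteq> 0" using assms by (auto simp: ua_def ub_def)
  have e: "r powi (a+b) = ua * ub" "r powi (-a) = inverse ua"
    using assms by (auto simp: ua_def ub_def power_int_add power_int_minus)
  have N: "ua*ub - inverse (ua*ub) = ub * (ua - inverse ua) + inverse ua * (ub - inverse ub)"
    using u0 by (simp add: field_simps)
  show ?thesis unfolding qint_alt e ua_def[symmetric] ub_def[symmetric] N by (rule aux_div2)
qed

lemma gb_0[simp]: "gb r N 0 = 1" by (simp add: gb_def)

lemma gb_pascal:
  assumes T: "q_transcendental (q::'a::field_char_0)"
  shows "gb (q^2) (N+1) (Suc k) = (q^2) powi (int k+1) * gb (q^2) N (Suc k) + (q^2) powi (-(N - int k)) * gb (q^2) N k"
proof -
  define r where "r = (q^2)"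
  have r0: "r \<noteq> 0" using trans_nz[OF T] by (simp add: r_def)
  define Pr where "Pr = (\<Prod>i<k. qint r (N - int i))"
  define F where "F = qfact r k"
  define c where "c = qint r (int k + 1)"
  have F0: "F \<noteq> 0" unfolding F_def r_def by (rule qfactQ_nz[OF T])
  have c0: "c \<noteq> 0" unfolding c_def r_def by (rule qintQ_nz[OF T]) simp
  have fS: "qfact r (Suc k) = F * c" by (simp add: qfact_Suc F_def c_def)
  have l: "gb r (N+1) (Suc k) = qint r (N+1) * Pr / (F * c)"
    unfolding gb_def fS prod.lessThan_Suc_shift Pr_def by (simp add: algebra_simps)
  have m: "gb r N (Suc k) = Pr * qint r (N - int k) / (F * c)"
    unfolding gb_def fS Pr_def by simp
  have n: "gb r N k = Pr / F" unfolding gb_def Pr_def F_def ..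
  have id: "qint r (N+1) = r powi (int k + 1) * qint r (N - int k) + r powi (-(N - int k)) * c"
    using qint_add[OF r0, of "N - int k" "int k + 1"] unfolding c_def by simp
  have "gb r (N+1) (Suc k) = r powi (int k+1) * gb r N (Suc k) + r powi (-(N - int k)) * gb r N k"
    unfolding l m n id using F0 c0 by (simp add: field_simps)
  thus ?thesis unfolding r_def .
qed

lemma gb_Z:
  assumes T: "q_transcendental (q::'a::field_char_0)"
  shows "in_Zq q (gb (q^2) N k)"
proof -
  have q0: "q \<noteq> 0" by (rule trans_nz[OF T])
  have Zp: "in_Zq q ((q^2) powi j)" for j
    using Z_powi[OF q0, of "2*j"] by (simp add: pwQ)
  show ?thesis
  proof (induction k arbitrary: N)
    case 0
    then show ?case using Z_1[OF q0] by simp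
  next
    case (Suc k)
    show ?case
    proof (induction N rule: int_induct[where k="int k"])
      case base
      have "gb (q^2) (int k) (Suc k) = 0" unfolding gb_def
        by (simp add: prod.lessThan_Suc)
      then show ?case using Z_0[OF q0] by simp
    next
      case (step1 i)
      then show ?case unfolding gb_pascal[OF T]
        by (intro Z_add[OF q0] Z_mult[OF q0] Zp Suc.IH)
    next
      case (step2 i)
      define A where "A = (q^2) powi (int k+1)"
      have A0: "A \<noteq> 0" using q0 by (simp add: A_def)
      have P: "gb (q^2) i (Suc k) = A * gb (q^2) (i - 1) (Suc k) + (q^2) powi (-(i - 1 - int k)) * gb (q^2) (i-1) k"
        using gb_pascal[OF T, of "i - 1" k] unfolding A_def by simp
      have e: "gb (q^2) (i - 1) (Suc k) = (q^2) powi (-(int k+1)) * (gb (q^2) i (Suc k) - (q^2) powi (-(i - 1 - int k)) * gb (q^2) (i-1) k)"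
        unfolding P power_int_minus[of "q^2" "int k + 1"] A_def[symmetric] using A0 by (simp add: field_simps)
      show ?case unfolding e
        by (intro Z_diff[OF q0] Z_mult[OF q0] Zp Suc.IH step2.IH)
    qed
  qed
qed

lemma prod_fact:
  assumes "a \<le> N"
  shows "(\<Prod>i<a. qint r (int N - int i)) * qfact r (N - a) = qfact r N"
  using assms
proof (induction a)
  case 0
  then show ?case by simp
next
  case (Suc a)
  have e: "N - a = Suc (N - Suc a)" using Suc.prems by simp
  have e2: "int (N - Suc a) + 1 = int N - int a" using Suc.prems by simp
  have "(\<Prod>i<Suc a. qint r (int N - int i)) * qfact r (N - Suc a)
       = (\<Prod>i<a. qint r (int N - int i)) * (qfact r (N - Suc a) * qint r (int N - int a))"
    by (simp add: prod.lessThan_Suc algebra_simps)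
  also have "qfact r (N - Suc a) * qint r (int N - int a) = qfact r (N - a)"
    unfolding e qfact_Suc e2 ..
  finally show ?case using Suc by simp
qed

lemma qbinom2_gb:
  assumes T: "q_transcendental (q::'a::field_char_0)" and a: "a \<le> N"
  shows "qbinom2 q N a = gb (q^2) (int N) a"
  unfolding qbinom2_def gb_def prod_fact[OF a, of "q^2", symmetric]
  using qfactQ_nz[OF T] by simp

lemma qbinom2_Z:
  assumes T: "q_transcendental (q::'a::field_char_0)" and a: "a \<le> N"
  shows "in_Zq q (qbinom2 q N a)"
  unfolding qbinom2_gb[OF T a] by (rule gb_Z[OF T])


lemma pw4: "(x::'a::field) powi (4*k) = (x powi k)^4" "(x::'a::field) powi (k*4) = (x powi k)^4"
  by (simp_all add: power_int_power' mult.commute)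

lemma GI1:
  fixes q :: "'a::field" and l m :: int
  assumes q0: "q \<noteq> 0" and q1: "q - inverse q \<noteq> 0" and q2: "q^2 - inverse (q^2) \<noteq> 0"
  shows "((qint q (2*l-1))^2 - (qint q (2*m+1))^2) * qint (q^2) (2*m+1) * qint (q^2) (2*m+2)
     = (q powi (2*m+1) + q powi (-(2*m+1))) * (q powi (2*m+2) + q powi (-(2*m+2)))
       * qint (q^2) (l+m) * qint (q^2) (l-m-1) * qint q (2*m+1) * qint q (2*m+2)"
proof -
  define N where "N = (\<lambda>k. q powi k - inverse (q powi k))"
  define d1 where "d1 = q - inverse q"
  define d2 where "d2 = q^2 - inverse (q^2)"
  have e1: "qint q k = N k / d1" for k by (simp add: qint_alt N_def d1_def)
  have e2: "qint (q^2) k = N (2*k) / d2" for k by (simp add: qint_alt N_def d2_def pwQ)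
  define u where "u = q powi l"
  define v where "v = q powi m"
  have u0: "u \<noteq> 0" and v0: "v \<noteq> 0" using q0 by (auto simp: u_def v_def)
  have H: "((N (2*l-1))^2 - (N (2*m+1))^2) * N (2*(2*m+1)) * N (2*(2*m+2))
     = (q powi (2*m+1) + q powi (-(2*m+1))) * (q powi (2*m+2) + q powi (-(2*m+2)))
       * N (2*(l+m)) * N (2*(l-m-1)) * N (2*m+1) * N (2*m+2)"
    unfolding N_def
    using q0 u0 v0
    apply (simp add: power_int_add power_int_diff pw2 power_int_minus right_diff_distrib pw4 flip: u_def v_def)
    apply (simp add: field_simps)
    apply algebra
    done
  have nd1: "d1 \<noteq> 0" and nd2: "d2 \<noteq> 0" using q1 q2 by (auto simp: d1_def d2_def)
  show ?thesis unfolding e1 e2 using nd1 nd2 H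
    by (simp add: field_simps power2_eq_square)
qed

lemma GI2:
  fixes q :: "'a::field" and l m :: int
  assumes q0: "q \<noteq> 0" and q1: "q - inverse q \<noteq> 0" and q2: "q^2 - inverse (q^2) \<noteq> 0"
  shows "qint q (2*l-1) * qint (q^2) (2*m+1) = qint q (2*m+1) * (qint (q^2) (l+m) + qint (q^2) (l-m-1))"
proof -
  define N where "N = (\<lambda>k. q powi k - inverse (q powi k))"
  define d1 where "d1 = q - inverse q"
  define d2 where "d2 = q^2 - inverse (q^2)"
  have e1: "qint q k = N k / d1" for k by (simp add: qint_alt N_def d1_def)
  have e2: "qint (q^2) k = N (2*k) / d2" for k by (simp add: qint_alt N_def d2_def pwQ)
  define u where "u = q powi l"
  define v where "v = q powi m"
  have u0: "u \<noteq> 0" and v0: "v \<noteq> 0" using q0 by (auto simp: u_def v_def)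
  have H: "N (2*l-1) * N (2*(2*m+1)) = N (2*m+1) * (N (2*(l+m)) + N (2*(l-m-1)))"
    unfolding N_def
    using q0 u0 v0
    apply (simp add: power_int_add power_int_diff pw2 power_int_minus right_diff_distrib pw4 flip: u_def v_def)
    apply (simp add: field_simps)
    apply algebra
    done
  have nd1: "d1 \<noteq> 0" and nd2: "d2 \<noteq> 0" using q1 q2 by (auto simp: d1_def d2_def)
  show ?thesis unfolding e1 e2 using nd1 nd2 H
    by (simp add: field_simps)
qed


lemma S1: "(\<Sum>a<m. smult (f a) (h (Suc m - a))) = (\<Sum>a<Suc m. smult (if a < m then f a else 0) (h (Suc m - a)))"
  by (simp add: sum.lessThan_Suc)

lemma S2: "(\<Sum>a<m. smult (f a) (h (m - a))) = (\<Sum>a<Suc m. smult (if a = 0 then 0 else f (a - 1)) (h (Suc m - a)))"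
  by (subst sum.lessThan_Suc_shift) simp

lemma smult_sum2: "smult c (\<Sum>i\<in>S. f i) = (\<Sum>i\<in>S. smult c (f i))"
  by (induction S rule: infinite_finite_induct) (simp_all add: smult_add_right)

definition Esum :: "'a::field \<Rightarrow> nat \<Rightarrow> 'a poly" where
  "Esum q m = (\<Sum>a<m. smult (q powi ((3 - 2 * int m) * int a) * qbinom2 q (m - 1) a) (gdiv q (2*m - 2*a)))"

definition Osum :: "'a::field \<Rightarrow> nat \<Rightarrow> 'a poly" where
  "Osum q m = (\<Sum>a<m. smult (q powi ((1 - 2 * int m) * int a) * qbinom2 q (m - 1) a) (gdiv q (2*m - 2*a + 1)))"

lemma Esum_alt: "Esum q m = (\<Sum>a<m. smult (q powi ((3 - 2 * int m) * int a) * qbinom2 q (m - 1) a) (gdiv q (2*(m - a))))"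
  unfolding Esum_def by (simp add: right_diff_distrib')

lemma Osum_alt: "Osum q m = (\<Sum>a<m. smult (q powi ((1 - 2 * int m) * int a) * qbinom2 q (m - 1) a) (gdiv q (2*(m - a) + 1)))"
  unfolding Osum_def by (simp add: right_diff_distrib')

lemma Step1:
  assumes T: "q_transcendental (q::'a::field_char_0)" and m: "m \<ge> 1"
  shows "smult (qint q (int (2*m) + 2)) (Esum q (Suc m)) = [:0,1:] * Osum q m
           + smult (q powi (-2*int(2*m)) * qint q (int(2*m) - 1)) (Esum q m)"
proof -
  let ?e = "\<lambda>a. q powi ((1 - 2*int m) * int a) * qbinom2 q (m-1) a"
  let ?c = "\<lambda>a. q powi ((3 - 2*int m) * int a) * qbinom2 q (m-1) a"
  let ?k = "q powi (-2*int(2*m)) * qint q (int(2*m) - 1)"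
  let ?H = "\<lambda>j. gdiv q (2*j)"
  have "[:0,1:] * Osum q m = (\<Sum>a<m. smult (?e a) ([:0,1:] * gdiv q (2*(m - a) + 1)))"
    unfolding Osum_alt by (simp add: sum_distrib_left mult_smult_right)
  also have "\<dots> = (\<Sum>a<m. smult (?e a * qint q (2*int (m-a)+2)) (?H (Suc m - a))
                      + smult (?e a * qint q (2*int (m-a)+1)) (?H (m - a)))"
  proof (rule sum.cong[OF refl])
    fix a assume "a \<in> {..<m}"
    hence "2*(m-a)+2 = 2*(Suc m - a)" by simp
    thus "smult (?e a) ([:0,1:] * gdiv q (2*(m - a) + 1)) =
          smult (?e a * qint q (2*int (m-a)+2)) (?H (Suc m - a)) + smult (?e a * qint q (2*int (m-a)+1)) (?H (m - a))"
      unfolding GH2[OF T] by (simp add: smult_add_right)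
  qed
  also have "\<dots> = (\<Sum>a<m. smult (?e a * qint q (2*int (m-a)+2)) (?H (Suc m - a)))
                  + (\<Sum>a<m. smult (?e a * qint q (2*int (m-a)+1)) (?H (m - a)))"
    by (rule sum.distrib)
  finally have o: "[:0,1:] * Osum q m = (\<Sum>a<m. smult (?e a * qint q (2*int (m-a)+2)) (?H (Suc m - a)))
                  + (\<Sum>a<m. smult (?e a * qint q (2*int (m-a)+1)) (?H (m - a)))" .
  have ek: "smult ?k (Esum q m) = (\<Sum>a<m. smult (?k * ?c a) (?H (m - a)))"
    unfolding Esum_alt by (simp add: smult_sum2)
  have "[:0,1:] * Osum q m + smult ?k (Esum q m) =
        (\<Sum>a<m. smult (?e a * qint q (2*int (m-a)+2)) (?H (Suc m - a)))
      + (\<Sum>a<m. smult (?e a * qint q (2*int (m-a)+1) + ?k * ?c a) (?H (m - a)))"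
    unfolding o ek by (simp add: sum.distrib smult_add_left add.assoc)
  also have "\<dots> = (\<Sum>a<Suc m. smult (if a < m then ?e a * qint q (2*int (m-a)+2) else 0) (?H (Suc m - a)))
      + (\<Sum>a<Suc m. smult (if a = 0 then 0 else ?e (a-1) * qint q (2*int (m-(a-1))+1) + ?k * ?c (a-1)) (?H (Suc m - a)))"
    by (subst S1, subst S2, rule refl)
  also have "\<dots> = (\<Sum>a<Suc m. smult (qint q (int (2*m) + 2) * (q powi ((3 - 2 * int (Suc m)) * int a) * qbinom2 q (Suc m - 1) a)) (?H (Suc m - a)))"
    unfolding sum.distrib[symmetric] smult_add_left[symmetric]
    by (rule sum.cong[OF refl], subst C1[OF T m], simp_all)
  also have "\<dots> = smult (qint q (int (2*m) + 2)) (Esum q (Suc m))"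
    unfolding Esum_alt smult_sum2 smult_smult ..
  finally show ?thesis by simp
qed

lemma Step2:
  assumes T: "q_transcendental (q::'a::field_char_0)" and m: "m \<ge> 1"
  shows "smult (qint q (int (2*m+1) + 2)) (Osum q (Suc m)) = [:0,1:] * Esum q (Suc m)
           + smult (q powi (-2*int(2*m+1)) * qint q (int(2*m+1) - 1)) (Osum q m)"
proof -
  let ?e = "\<lambda>a. q powi ((1 - 2*int m) * int a) * qbinom2 q (m-1) a"
  let ?c = "\<lambda>a. q powi ((3 - 2*int (Suc m)) * int a) * qbinom2 q (Suc m - 1) a"
  let ?k = "q powi (-2*int(2*m+1)) * qint q (int(2*m+1) - 1)"
  let ?H = "\<lambda>j. gdiv q (2*j+1)"
  have x: "[:0,1:] * Esum q (Suc m) = (\<Sum>a<Suc m. smult (?c a * qint q (2*int (Suc m - a)+1)) (?H (Suc m - a)))"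
    unfolding Esum_alt sum_distrib_left mult_smult_right GH1[OF T] smult_smult ..
  have ok: "smult ?k (Osum q m) = (\<Sum>a<m. smult (?k * ?e a) (?H (m - a)))"
    unfolding Osum_alt smult_sum2 smult_smult ..
  have "[:0,1:] * Esum q (Suc m) + smult ?k (Osum q m) =
      (\<Sum>a<Suc m. smult (?c a * qint q (2*int (Suc m - a)+1)) (?H (Suc m - a)))
    + (\<Sum>a<Suc m. smult (if a = 0 then 0 else ?k * ?e (a-1)) (?H (Suc m - a)))"
    unfolding x ok by (subst S2, rule refl)
  also have "\<dots> = (\<Sum>a<Suc m. smult (qint q (int (2*m+1) + 2) * (q powi ((1 - 2 * int (Suc m)) * int a) * qbinom2 q (Suc m - 1) a)) (?H (Suc m - a)))"
    unfolding sum.distrib[symmetric] smult_add_left[symmetric]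
    by (rule sum.cong[OF refl], subst C2[OF T m], simp_all)
  also have "\<dots> = smult (qint q (int (2*m+1) + 2)) (Osum q (Suc m))"
    unfolding Osum_alt smult_sum2 smult_smult ..
  finally show ?thesis by simp
qed

lemma smult_cancel':
  fixes c :: "'a::field"
  assumes "c \<noteq> 0" "smult c p = smult c r" shows "p = r"
proof -
  have "smult (inverse c) (smult c p) = smult (inverse c) (smult c r)" using assms(2) by simp
  thus ?thesis using assms(1) by simp
qed

lemma qint_1: assumes T: "q_transcendental (q::'a::field_char_0)" shows "qint q 1 = 1"
  using qq_nz[OF T] by (simp add: qint_def power_int_minus)

lemma qint_m1: assumes T: "q_transcendental (q::'a::field_char_0)" shows "qint q (-1) = -1"
  using qq_nz[OF T] by (simp add: qint_def power_int_minus field_simps)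

lemma Base:
  assumes T: "q_transcendental (q::'a::field_char_0)"
  shows "pdiv q 2 = Esum q 1 \<and> pdiv q 3 = Osum q 1"
proof -
  have q0: "q \<noteq> 0" by (rule trans_nz[OF T])
  have pp2: "pp q 2 = [:-1,0,1:]"
    using qint_1[OF T] qint_m1[OF T] by (simp add: numeral_2_eq_2)
  have gg2: "gg q 2 = [:-1,0,1:]"
    using qint_1[OF T] by (simp add: gg_def)
  have pp3: "pp q 3 = [:0,-1,0,1:]"
  proof -
    have t: "(3::nat) = Suc (Suc 1)" by simp
    have "pp q 3 = pp q (Suc (Suc 1))" by (subst t, rule refl)
    also have "\<dots> = [:0,-1,0,1:]" unfolding pp.simps(3) using pp2 by (simp add: numeral_2_eq_2)
    finally show ?thesis .
  qed
  have gg3: "gg q 3 = [:0,-1,0,1:]"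
  proof -
    have "gg q 3 = gg q (2*1+1)" by simp
    also have "\<dots> = [:0,1:] * gg q 2" unfolding gg_odd by simp
    finally show ?thesis using gg2 by simp
  qed
  have E1: "Esum q 1 = gdiv q 2" unfolding Esum_def using qbinom2_0[OF T] by simp
  have O1: "Osum q 1 = gdiv q 3" unfolding Osum_def using qbinom2_0[OF T] by simp
  show ?thesis unfolding E1 O1 pdiv_def gdiv_def pp2 gg2 pp3 gg3 by simp
qed

lemma Main1:
  assumes T: "q_transcendental (q::'a::field_char_0)" and m: "m \<ge> 1"
  shows "pdiv q (2*m) = Esum q m \<and> pdiv q (2*m+1) = Osum q m"
  using m
proof (induction m rule: dec_induct)
  case base
  then show ?case using Base[OF T] by simp
next
  case (step m)
  have m1: "m \<ge> 1" using step.hyps by simp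
  have IH1: "pdiv q (2*m) = Esum q m" and IH2: "pdiv q (2*m+1) = Osum q m" using step.IH by auto
  have r1: "smult (qint q (int (2*m) + 2)) (pdiv q (2*m+2)) = [:0,1:] * pdiv q (2*m+1)
           + smult (q powi (-2*int (2*m)) * qint q (int (2*m) - 1)) (pdiv q (2*m))"
    using pdiv_rec[OF T, of "2*m"] by simp
  have A: "pdiv q (2*Suc m) = Esum q (Suc m)"
  proof -
    have "smult (qint q (int (2*m) + 2)) (pdiv q (2*m+2)) = smult (qint q (int (2*m) + 2)) (Esum q (Suc m))"
      unfolding r1 IH1 IH2 Step1[OF T m1] ..
    hence "pdiv q (2*m+2) = Esum q (Suc m)"
      by (rule smult_cancel'[rotated]) (rule qint_nz[OF T], simp)
    thus ?thesis by simp
  qed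
  have r2: "smult (qint q (int (2*m+1) + 2)) (pdiv q (2*m+1+2)) = [:0,1:] * pdiv q (2*m+1+1)
           + smult (q powi (-2*int (2*m+1)) * qint q (int (2*m+1) - 1)) (pdiv q (2*m+1))"
    by (rule pdiv_rec[OF T])
  have B: "pdiv q (2*Suc m+1) = Osum q (Suc m)"
  proof -
    have e: "2*m+1+1 = 2*Suc m" by simp
    have "smult (qint q (int (2*m+1) + 2)) (pdiv q (2*m+1+2)) = smult (qint q (int (2*m+1) + 2)) (Osum q (Suc m))"
      unfolding r2 e A IH2 Step2[OF T m1] ..
    hence "pdiv q (2*m+1+2) = Osum q (Suc m)"
      by (rule smult_cancel'[rotated]) (rule qint_nz[OF T], simp)
    thus ?thesis by simp
  qed
  show ?case using A B by simp
qed


definition Phi :: "'a::field \<Rightarrow> nat \<Rightarrow> 'a" where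
  "Phi q m = (\<Prod>j<2*m. q powi (int j + 1) + q powi (-(int j + 1)))"

lemma Phi_Suc: "Phi q (Suc m) = Phi q m * (q powi (2*int m+1) + q powi (-(2*int m+1))) * (q powi (2*int m+2) + q powi (-(2*int m+2)))"
proof -
  have "2 * Suc m = Suc (Suc (2*m))" by simp
  thus ?thesis unfolding Phi_def by (simp add: prod.lessThan_Suc algebra_simps)
qed

lemma gb_shift:
  "(\<Prod>i<k. qint r (N - int (Suc i))) = (\<Prod>i<k. qint r ((N - 1) - int i))"
  by (rule prod.cong) (auto simp: algebra_simps)

lemma gval_even:
  assumes T: "q_transcendental (q::'a::field_char_0)"
  shows "poly (gdiv q (2*m)) (qint q (2*l-1)) = Phi q m * gb (q^2) (l + int m - 1) (2*m)"
proof (induction m)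
  case 0
  then show ?case by (simp add: gdiv_def gg_def Phi_def)
next
  case (Suc m)
  define x where "x = qint q (2*l-1)"
  define a where "a = qint q (2*int m + 1)"
  define b where "b = qint q (2*int m + 2)"
  define A where "A = qint (q^2) (2*int m + 1)"
  define B where "B = qint (q^2) (2*int m + 2)"
  define F where "F = qfact q (2*m)"
  define FQ where "FQ = qfact (q^2) (2*m)"
  define Pr where "Pr = (\<Prod>i<2*m. qint (q^2) ((l + int m - 1) - int i))"
  have q0: "q \<noteq> 0" by (rule trans_nz[OF T])
  have a0: "a \<noteq> 0" "b \<noteq> 0" unfolding a_def b_def by (auto intro!: qint_nz[OF T])
  have A0: "A \<noteq> 0" "B \<noteq> 0" unfolding A_def B_def by (auto intro!: qintQ_nz[OF T])
  have F0: "F \<noteq> 0" "FQ \<noteq> 0" unfolding F_def FQ_def by (auto intro!: qfact_nz[OF T] qfactQ_nz[OF T])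
  have e2: "2 * Suc m = Suc (Suc (2*m))" by simp
  have fq: "qfact q (2 * Suc m) = F * a * b"
    unfolding e2 qfact_Suc F_def a_def b_def by (simp add: algebra_simps)
  have fQ: "qfact (q^2) (2 * Suc m) = FQ * A * B"
    unfolding e2 qfact_Suc FQ_def A_def B_def by (simp add: algebra_simps)
  have lhs: "poly (gdiv q (2 * Suc m)) x = (x^2 - a^2) / (a*b) * poly (gdiv q (2*m)) x"
  proof -
    have geq: "gg q (2 * Suc m) = [:- (a^2), 0, 1:] * gg q (2*m)"
      using gg_even[of q m] unfolding a_def by simp
    have "poly (gg q (2 * Suc m)) x = poly ([:- (a^2), 0, 1:] * gg q (2*m)) x" by (simp only: geq)
    also have "\<dots> = (x^2 - a^2) * poly (gg q (2*m)) x" by (simp add: algebra_simps power2_eq_square)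
    finally have pg: "poly (gg q (2 * Suc m)) x = (x^2 - a^2) * poly (gg q (2*m)) x" .
    show ?thesis unfolding gdiv_def poly_smult fq pg F_def[symmetric] using a0 F0
      by (simp add: field_simps)
  qed
  have gbS: "gb (q^2) (l + int (Suc m) - 1) (2 * Suc m) = Pr * qint (q^2) (l + int m) * qint (q^2) (l - int m - 1) / (FQ * A * B)"
  proof -
    have "(\<Prod>i<2 * Suc m. qint (q^2) (l + int (Suc m) - 1 - int i))
        = qint (q^2) (l + int m) * (\<Prod>i<2*m. qint (q^2) (l + int m - int (Suc i))) * qint (q^2) (l + int m - int (Suc (2*m)))"
    proof -
      define f where "f = (\<lambda>i::nat. qint (q^2) (l + int (Suc m) - 1 - int i))"
      have "(\<Prod>i<Suc (Suc (2*m)). f i) = (\<Prod>i<Suc (2*m). f i) * f (Suc (2*m))" by (rule prod.lessThan_Suc)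
      also have "(\<Prod>i<Suc (2*m). f i) = f 0 * (\<Prod>i<2*m. f (Suc i))" by (rule prod.lessThan_Suc_shift)
      finally show ?thesis unfolding e2 f_def by (simp add: algebra_simps)
    qed
    also have "\<dots> = Pr * qint (q^2) (l + int m) * qint (q^2) (l - int m - 1)"
      unfolding gb_shift Pr_def by (simp add: algebra_simps)
    finally show ?thesis unfolding gb_def fQ by simp
  qed
  have IH: "poly (gdiv q (2*m)) x = Phi q m * (Pr / FQ)"
    using Suc.IH unfolding x_def gb_def Pr_def FQ_def by simp
  have GI: "(x^2 - a^2) * A * B = (q powi (2*int m+1) + q powi (-(2*int m+1))) * (q powi (2*int m+2) + q powi (-(2*int m+2)))
       * qint (q^2) (l+int m) * qint (q^2) (l-int m-1) * a * b"
    unfolding x_def a_def b_def A_def B_def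
    by (rule GI1[OF q0 qq_nz[OF T]]) (use qintQ_nz[OF T, of 1] in \<open>auto simp: qint_def split: if_splits\<close>)
  have xe: "x^2 - a^2 = (q powi (2*int m+1) + q powi (-(2*int m+1))) * (q powi (2*int m+2) + q powi (-(2*int m+2)))
       * qint (q^2) (l+int m) * qint (q^2) (l-int m-1) * a * b / (A * B)"
    using GI A0 by (simp add: field_simps)
  show ?case
    unfolding x_def[symmetric] lhs gbS IH Phi_Suc
    unfolding xe
    using a0 A0 F0 by (simp add: field_simps)
qed

lemma gval_odd:
  assumes T: "q_transcendental (q::'a::field_char_0)"
  shows "poly (gdiv q (2*m+1)) (qint q (2*l-1)) = Phi q m * (gb (q^2) (l + int m) (2*m+1) + gb (q^2) (l + int m - 1) (2*m+1))"
proof -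
  define x where "x = qint q (2*l-1)"
  define a where "a = qint q (2*int m + 1)"
  define A where "A = qint (q^2) (2*int m + 1)"
  define F where "F = qfact q (2*m)"
  define FQ where "FQ = qfact (q^2) (2*m)"
  define Pr where "Pr = (\<Prod>i<2*m. qint (q^2) ((l + int m - 1) - int i))"
  have q0: "q \<noteq> 0" by (rule trans_nz[OF T])
  have a0: "a \<noteq> 0" unfolding a_def by (auto intro!: qint_nz[OF T])
  have A0: "A \<noteq> 0" unfolding A_def by (auto intro!: qintQ_nz[OF T])
  have F0: "F \<noteq> 0" "FQ \<noteq> 0" unfolding F_def FQ_def by (auto intro!: qfact_nz[OF T] qfactQ_nz[OF T])
  have fq: "qfact q (2*m+1) = F * a"
    unfolding Suc_eq_plus1[symmetric] qfact_Suc F_def a_def by simp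
  have fQ: "qfact (q^2) (2*m+1) = FQ * A"
    unfolding Suc_eq_plus1[symmetric] qfact_Suc FQ_def A_def by simp
  have lhs: "poly (gdiv q (2*m+1)) x = x / a * poly (gdiv q (2*m)) x"
    unfolding gdiv_def fq gg_odd F_def[symmetric] using a0 F0 by (simp add: field_simps)
  have g1: "gb (q^2) (l + int m) (2*m+1) = Pr * qint (q^2) (l + int m) / (FQ * A)"
  proof -
    have "(\<Prod>i<2*m+1. qint (q^2) (l + int m - int i))
        = qint (q^2) (l + int m) * (\<Prod>i<2*m. qint (q^2) (l + int m - int (Suc i)))"
      unfolding Suc_eq_plus1[symmetric] prod.lessThan_Suc_shift by simp
    also have "\<dots> = Pr * qint (q^2) (l + int m)"
      unfolding gb_shift Pr_def by (simp add: algebra_simps)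
    finally show ?thesis unfolding gb_def fQ by simp
  qed
  have g2: "gb (q^2) (l + int m - 1) (2*m+1) = Pr * qint (q^2) (l - int m - 1) / (FQ * A)"
  proof -
    have "(\<Prod>i<2*m+1. qint (q^2) (l + int m - 1 - int i))
        = Pr * qint (q^2) (l + int m - 1 - int (2*m))"
      unfolding Suc_eq_plus1[symmetric] prod.lessThan_Suc Pr_def by simp
    also have "l + int m - 1 - int (2*m) = l - int m - 1" by simp
    finally show ?thesis unfolding gb_def fQ by simp
  qed
  have ev: "poly (gdiv q (2*m)) x = Phi q m * (Pr / FQ)"
    using gval_even[OF T, of m l] unfolding x_def gb_def Pr_def FQ_def by simp
  have GI: "x * A = a * (qint (q^2) (l + int m) + qint (q^2) (l - int m - 1))"
    unfolding x_def a_def A_def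
    by (rule GI2[OF q0 qq_nz[OF T]]) (use qintQ_nz[OF T, of 1] in \<open>auto simp: qint_def split: if_splits\<close>)
  have xe: "x = a * (qint (q^2) (l + int m) + qint (q^2) (l - int m - 1)) / A"
    using GI A0 by (simp add: field_simps)
  show ?thesis
    unfolding x_def[symmetric] lhs g1 g2 ev
    unfolding xe
    using a0 A0 F0 by (simp add: field_simps)
qed


lemma Phi_Z: assumes T: "q_transcendental (q::'a::field_char_0)" shows "in_Zq q (Phi q m)"
  unfolding Phi_def using trans_nz[OF T]
  by (intro Z_prod) (auto intro!: Z_add Z_powi)

lemma Zq_final:
  assumes T: "q_transcendental (q::'a::field_char_0)"
  shows "in_Zq q (poly (pdiv q n) (qint q (2 * l - 1)))"
proof -
  have q0: "q \<noteq> 0" by (rule trans_nz[OF T])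
  define x where "x = qint q (2 * l - 1)"
  have Zx: "in_Zq q x" unfolding x_def by (rule Z_qint[OF q0 T])
  have Ge: "in_Zq q (poly (gdiv q (2*j)) x)" for j
    unfolding x_def gval_even[OF T]
    by (intro Z_mult[OF q0] Phi_Z[OF T] gb_Z[OF T])
  have Go: "in_Zq q (poly (gdiv q (2*j+1)) x)" for j
    unfolding x_def gval_odd[OF T]
    by (intro Z_mult[OF q0] Z_add[OF q0] Phi_Z[OF T] gb_Z[OF T])
  consider "n = 0" | "n = 1" | m where "m \<ge> 1" "n = 2*m" | m where "m \<ge> 1" "n = 2*m+1"
  proof -
    obtain m where "n = 2*m \<or> n = 2*m+1" by (metis odd_two_times_div_two_succ even_two_times_div_two add.commute)
    moreover have "m = 0 \<or> m \<ge> 1" by auto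
    ultimately show ?thesis using that by auto
  qed
  then show ?thesis
  proof cases
    case 1
    then show ?thesis unfolding pdiv_def using Z_1[OF q0] by simp
  next
    case 2
    then show ?thesis unfolding pdiv_def using Zx qint_1[OF T] by (simp add: x_def qfact_Suc)
  next
    case (3 m)
    have "poly (pdiv q n) x = poly (Esum q m) x" using Main1[OF T 3(1)] 3(2) by simp
    also have "\<dots> = (\<Sum>a<m. (q powi ((3 - 2 * int m) * int a) * qbinom2 q (m - 1) a) * poly (gdiv q (2*(m - a))) x)"
      unfolding Esum_alt by (simp add: poly_sum)
    finally have e: "poly (pdiv q n) x = \<dots>" .
    show ?thesis unfolding x_def[symmetric] e
      by (intro Z_sum[OF q0] Z_mult[OF q0] Z_powi[OF q0] Ge qbinom2_Z[OF T]) auto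
  next
    case (4 m)
    have "poly (pdiv q n) x = poly (Osum q m) x" using Main1[OF T 4(1)] 4(2) by simp
    also have "\<dots> = (\<Sum>a<m. (q powi ((1 - 2 * int m) * int a) * qbinom2 q (m - 1) a) * poly (gdiv q (2*(m - a)+1)) x)"
      unfolding Osum_alt by (simp add: poly_sum)
    finally have e: "poly (pdiv q n) x = \<dots>" .
    show ?thesis unfolding x_def[symmetric] e
      by (intro Z_sum[OF q0] Z_mult[OF q0] Z_powi[OF q0] Go qbinom2_Z[OF T]) auto
  qed
qed

theorem proposition4p4:
  fixes q :: "'a::field_char_0"
  assumes "q_transcendental q"
  shows "(\<forall>m::nat. m \<ge> 1 \<longrightarrow>
           pdiv q (2*m) = (\<Sum>a<m. smult (q powi ((3 - 2 * int m) * int a) * qbinom2 q (m - 1) a)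
                                         (gdiv q (2*m - 2*a)))
         \<and> pdiv q (2*m+1) = (\<Sum>a<m. smult (q powi ((1 - 2 * int m) * int a) * qbinom2 q (m - 1) a)
                                         (gdiv q (2*m - 2*a + 1))))
       \<and> (\<forall>(n::nat) (l::int). in_Zq q (poly (pdiv q n) (qint q (2 * l - 1))))"
  using Main1[OF assms] Zq_final[OF assms] unfolding Esum_def Osum_def by blast


end
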